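(* There exist $B_n$-invariant homogeneous polynomials $t_1(p),\dots,t_n(p)$ with $\deg t_k=2k$, forming a coordinate system on the orbit space, in which the cometric $\eta$ is constant and moreover $\eta^{ij}(t)=\delta_{i,n+1-j}$ for all $i,j=1,\dots,n$.
   Context: $n\ge2$. $B_n$ acts on $\mathbb{C}^n$ (coordinates $p_1,\dots,p_n$) by permutations and sign changes. $u_k=\sum_{1\le i_1<\dots<i_k\le n}p_{i_1}^2\cdots p_{i_k}^2$ ($k=1,\dots,n$), $u_0=1$, $u_k=0$ for $k<0$. Let $g^{ij}(u)=\frac{1}{4(n-1)}\sum_{k,l}\frac{1-\delta^{kl}}{p_kp_l}\frac{\partial u_i}{\partial p_k}\frac{\partial u_j}{\partial p_l}$ (normalized intersection form) and $\eta^{ij}(u)=\frac{\partial g^{ij}}{\partial u_{n-1}}(u)=\frac{2n-i-j}{n-1}u_{i+j-n-1}$, a flat contravariant metric on the orbit space with constant nonzero determinant. *)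

theory Defs
  imports Complex_Main "HOL-Combinatorics.Permutations"
begin

text \<open>Polynomials in the variables x_1,...,x_n with complex coefficients,
  represented by their coefficient function on exponent vectors
  (alpha i = exponent of x_i).\<close>

type_synonym mpoly = "(nat \<Rightarrow> nat) \<Rightarrow> complex"

definition is_mpoly :: "nat \<Rightarrow> mpoly \<Rightarrow> bool" where
  "is_mpoly n c \<longleftrightarrow> finite {\<alpha>. c \<alpha> \<noteq> 0} \<and>
     (\<forall>\<alpha>. c \<alpha> \<noteq> 0 \<longrightarrow> (\<forall>i. i \<notin> {1..n} \<longrightarrow> \<alpha> i = 0))"

definition meval :: "nat \<Rightarrow> mpoly \<Rightarrow> (nat \<Rightarrow> complex) \<Rightarrow> complex" where
  "meval n c x = (\<Sum>\<alpha> | c \<alpha> \<noteq> 0. c \<alpha> * (\<Prod>i\<in>{1..n}. x i ^ \<alpha> i))"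

definition mderiv :: "nat \<Rightarrow> mpoly \<Rightarrow> mpoly" where
  "mderiv i c = (\<lambda>\<alpha>. of_nat (\<alpha> i + 1) * c (\<alpha>(i := \<alpha> i + 1)))"

definition homogeneous :: "nat \<Rightarrow> nat \<Rightarrow> mpoly \<Rightarrow> bool" where
  "homogeneous n d c \<longleftrightarrow> (\<forall>\<alpha>. c \<alpha> \<noteq> 0 \<longrightarrow> (\<Sum>i\<in>{1..n}. \<alpha> i) = d)"

definition Bn_act :: "(nat \<Rightarrow> nat) \<Rightarrow> (nat \<Rightarrow> complex) \<Rightarrow> (nat \<Rightarrow> complex) \<Rightarrow> (nat \<Rightarrow> complex)" where
  "Bn_act \<sigma> \<epsilon> p = (\<lambda>i. \<epsilon> i * p (\<sigma> i))"

definition Bn_invariant :: "nat \<Rightarrow> mpoly \<Rightarrow> bool" where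
  "Bn_invariant n c \<longleftrightarrow> (\<forall>\<sigma> \<epsilon> p. \<sigma> permutes {1..n} \<longrightarrow> (\<forall>i\<in>{1..n}. \<epsilon> i = 1 \<or> \<epsilon> i = -1)
       \<longrightarrow> meval n c (Bn_act \<sigma> \<epsilon> p) = meval n c p)"

definition u_inv :: "nat \<Rightarrow> nat \<Rightarrow> (nat \<Rightarrow> complex) \<Rightarrow> complex" where
  "u_inv n k p = (\<Sum>S | S \<subseteq> {1..n} \<and> card S = k. \<Prod>i\<in>S. (p i)\<^sup>2)"

definition u_vec :: "nat \<Rightarrow> (nat \<Rightarrow> complex) \<Rightarrow> (nat \<Rightarrow> complex)" where
  "u_vec n p = (\<lambda>k. u_inv n k p)"

text \<open>The flat cometric eta^{ij}(u) = (2n-i-j)/(n-1) u_{i+j-n-1},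
  with u_0 = 1 and u_k = 0 for k < 0; y k is the value of the coordinate u_k.\<close>
definition eta :: "nat \<Rightarrow> nat \<Rightarrow> nat \<Rightarrow> (nat \<Rightarrow> complex) \<Rightarrow> complex" where
  "eta n i j y = (let k = int i + int j - int n - 1 in
     of_int (2 * int n - int i - int j) / of_nat (n - 1) *
     (if k < 0 then 0 else if k = 0 then 1 else y (nat k)))"

end

theory Submission
  imports Defs "HOL-Computational_Algebra.Formal_Power_Series"
begin

definition mono :: "nat \<Rightarrow> (nat \<Rightarrow> nat) \<Rightarrow> (nat \<Rightarrow> complex) \<Rightarrow> complex" where
  "mono n \<alpha> x = (\<Prod>i\<in>{1..n}. x i ^ \<alpha> i)"

lemma meval_mono: "meval n c x = (\<Sum>\<alpha> | c \<alpha> \<noteq> 0. c \<alpha> * mono n \<alpha> x)"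
  by (simp add: meval_def mono_def)

lemma meval_superset:
  assumes "finite A" "{\<alpha>. c \<alpha> \<noteq> 0} \<subseteq> A"
  shows "meval n c x = (\<Sum>\<alpha>\<in>A. c \<alpha> * mono n \<alpha> x)"
  unfolding meval_mono
  by (rule sum.mono_neutral_left) (use assms in auto)

definition mconst :: "complex \<Rightarrow> mpoly" where
  "mconst k = (\<lambda>\<alpha>. if \<alpha> = (\<lambda>_. 0) then k else 0)"

definition mvar :: "nat \<Rightarrow> mpoly" where
  "mvar i = (\<lambda>\<alpha>. if \<alpha> = (\<lambda>j. if j = i then 1 else 0) then 1 else 0)"

definition madd :: "mpoly \<Rightarrow> mpoly \<Rightarrow> mpoly" where
  "madd p q = (\<lambda>\<alpha>. p \<alpha> + q \<alpha>)"

definition mmul :: "mpoly \<Rightarrow> mpoly \<Rightarrow> mpoly" where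
  "mmul p q = (\<lambda>\<alpha>. \<Sum>bg \<in> {bg. bg \<in> {\<beta>. p \<beta> \<noteq> 0} \<times> {\<gamma>. q \<gamma> \<noteq> 0} \<and>
      (\<lambda>i. fst bg i + snd bg i) = \<alpha>}. p (fst bg) * q (snd bg))"

lemma mconst_ok: "is_mpoly n (mconst k)" "homogeneous n 0 (mconst k)" "meval n (mconst k) x = k"
proof -
  show "is_mpoly n (mconst k)" unfolding is_mpoly_def mconst_def
    by (auto intro: finite_subset[of _ "{\<lambda>_. 0}"])
  show "homogeneous n 0 (mconst k)" unfolding homogeneous_def mconst_def by auto
  have "meval n (mconst k) x = (\<Sum>\<alpha>\<in>{\<lambda>_. 0}. mconst k \<alpha> * mono n \<alpha> x)"
    by (rule meval_superset) (auto simp: mconst_def split: if_splits)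
  then show "meval n (mconst k) x = k" by (simp add: mconst_def mono_def)
qed

lemma mvar_ok:
  assumes "i \<in> {1..n}"
  shows "is_mpoly n (mvar i)" "homogeneous n 1 (mvar i)" "meval n (mvar i) x = x i"
proof -
  let ?e = "(\<lambda>j. if j = i then 1 else 0) :: nat \<Rightarrow> nat"
  show "is_mpoly n (mvar i)" unfolding is_mpoly_def mvar_def
    using assms by (auto intro: finite_subset[of _ "{?e}"])
  have "(\<Sum>j\<in>{1..n}. ?e j) = 1" using assms
    by (simp add: sum.delta)
  then show "homogeneous n 1 (mvar i)" unfolding homogeneous_def mvar_def by auto
  have "meval n (mvar i) x = (\<Sum>\<alpha>\<in>{?e}. mvar i \<alpha> * mono n \<alpha> x)"
    by (rule meval_superset) (auto simp: mvar_def split: if_splits)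
  also have "\<dots> = mono n ?e x" by (simp add: mvar_def)
  also have "\<dots> = (\<Prod>j\<in>{1..n}. if j = i then x i else 1)"
    unfolding mono_def by (rule prod.cong) auto
  also have "\<dots> = x i" using assms by (simp add: prod.delta)
  finally show "meval n (mvar i) x = x i" .
qed

lemma madd_ok:
  assumes "is_mpoly n p" "is_mpoly n q"
  shows "is_mpoly n (madd p q)" "meval n (madd p q) x = meval n p x + meval n q x"
    "homogeneous n d p \<Longrightarrow> homogeneous n d q \<Longrightarrow> homogeneous n d (madd p q)"
proof -
  have f: "finite ({\<alpha>. p \<alpha> \<noteq> 0} \<union> {\<alpha>. q \<alpha> \<noteq> 0})" using assms by (simp add: is_mpoly_def)
  show "is_mpoly n (madd p q)" unfolding is_mpoly_def
  proof (intro conjI allI impI)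
    show "finite {\<alpha>. madd p q \<alpha> \<noteq> 0}" by (rule finite_subset[OF _ f]) (auto simp: madd_def)
    fix \<alpha> i assume "madd p q \<alpha> \<noteq> 0" "i \<notin> {1..n}"
    then have "p \<alpha> \<noteq> 0 \<or> q \<alpha> \<noteq> 0" by (auto simp: madd_def)
    then show "\<alpha> i = 0" using assms \<open>i \<notin> {1..n}\<close> unfolding is_mpoly_def by blast
  qed
  have "meval n (madd p q) x = (\<Sum>\<alpha>\<in>{\<alpha>. p \<alpha> \<noteq> 0} \<union> {\<alpha>. q \<alpha> \<noteq> 0}. madd p q \<alpha> * mono n \<alpha> x)"
    by (rule meval_superset[OF f]) (auto simp: madd_def)
  also have "\<dots> = (\<Sum>\<alpha>\<in>{\<alpha>. p \<alpha> \<noteq> 0} \<union> {\<alpha>. q \<alpha> \<noteq> 0}. p \<alpha> * mono n \<alpha> x) +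
       (\<Sum>\<alpha>\<in>{\<alpha>. p \<alpha> \<noteq> 0} \<union> {\<alpha>. q \<alpha> \<noteq> 0}. q \<alpha> * mono n \<alpha> x)"
    by (simp add: madd_def distrib_right sum.distrib)
  also have "\<dots> = meval n p x + meval n q x"
    by (subst (1 2) meval_superset[OF f]) auto
  finally show "meval n (madd p q) x = meval n p x + meval n q x" .
  show "homogeneous n d p \<Longrightarrow> homogeneous n d q \<Longrightarrow> homogeneous n d (madd p q)"
    unfolding homogeneous_def madd_def by (metis add.left_neutral add.right_neutral)
qed

lemma mmul_ok:
  assumes "is_mpoly n p" "is_mpoly n q"
  shows "is_mpoly n (mmul p q)" "meval n (mmul p q) x = meval n p x * meval n q x"
    "homogeneous n d p \<Longrightarrow> homogeneous n e q \<Longrightarrow> homogeneous n (d + e) (mmul p q)"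
proof -
  define A where "A = {\<beta>. p \<beta> \<noteq> 0} \<times> {\<gamma>. q \<gamma> \<noteq> 0}"
  define g where "g = (\<lambda>bg::(nat\<Rightarrow>nat)\<times>(nat\<Rightarrow>nat). (\<lambda>i. fst bg i + snd bg i))"
  have fA: "finite A" using assms by (simp add: is_mpoly_def A_def)
  have fg: "finite (g ` A)" using fA by simp
  have supp: "{\<alpha>. mmul p q \<alpha> \<noteq> 0} \<subseteq> g ` A"
  proof
    fix \<alpha> assume a: "\<alpha> \<in> {\<alpha>. mmul p q \<alpha> \<noteq> 0}"
    show "\<alpha> \<in> g ` A"
    proof (rule ccontr)
      assume "\<alpha> \<notin> g ` A"
      then have e: "{bg. bg \<in> A \<and> g bg = \<alpha>} = {}" by auto
      have "mmul p q \<alpha> = (\<Sum>bg\<in>{bg. bg \<in> A \<and> g bg = \<alpha>}. p (fst bg) * q (snd bg))"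
        by (simp add: mmul_def A_def g_def)
      then have "mmul p q \<alpha> = 0" using e by simp
      then show False using a by simp
    qed
  qed
  show "is_mpoly n (mmul p q)" unfolding is_mpoly_def
  proof (intro conjI allI impI)
    show "finite {\<alpha>. mmul p q \<alpha> \<noteq> 0}" using supp fg finite_subset by blast
    fix \<alpha> i assume a: "mmul p q \<alpha> \<noteq> 0" "i \<notin> {1..n}"
    then obtain bg where "bg \<in> A" "\<alpha> = g bg" using supp by auto
    then show "\<alpha> i = 0" using assms a(2) unfolding is_mpoly_def A_def g_def by auto
  qed
  have "meval n (mmul p q) x = (\<Sum>\<alpha>\<in>g ` A. mmul p q \<alpha> * mono n \<alpha> x)"
    by (rule meval_superset[OF fg supp])
  also have "\<dots> = (\<Sum>\<alpha>\<in>g ` A. \<Sum>bg\<in>{bg. bg \<in> A \<and> g bg = \<alpha>}. p (fst bg) * q (snd bg) * mono n (g bg) x)"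
    unfolding mmul_def A_def[symmetric] g_def[symmetric] sum_distrib_right
    by (rule sum.cong[OF refl], rule sum.cong) (auto simp: g_def)
  also have "\<dots> = (\<Sum>bg\<in>A. p (fst bg) * q (snd bg) * mono n (g bg) x)"
    by (rule sum.group[OF fA fg]) auto
  also have "\<dots> = (\<Sum>bg\<in>A. (p (fst bg) * mono n (fst bg) x) * (q (snd bg) * mono n (snd bg) x))"
    by (rule sum.cong) (auto simp: g_def mono_def power_add prod.distrib)
  also have "\<dots> = (\<Sum>\<beta>\<in>{\<beta>. p \<beta> \<noteq> 0}. p \<beta> * mono n \<beta> x) * (\<Sum>\<gamma>\<in>{\<gamma>. q \<gamma> \<noteq> 0}. q \<gamma> * mono n \<gamma> x)"
    unfolding A_def sum_product sum.cartesian_product by (simp add: case_prod_beta)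
  also have "\<dots> = meval n p x * meval n q x" by (simp add: meval_mono)
  finally show "meval n (mmul p q) x = meval n p x * meval n q x" .
  show "homogeneous n d p \<Longrightarrow> homogeneous n e q \<Longrightarrow> homogeneous n (d + e) (mmul p q)"
  proof -
    assume h: "homogeneous n d p" "homogeneous n e q"
    show ?thesis unfolding homogeneous_def
    proof (intro allI impI)
      fix \<alpha> assume "mmul p q \<alpha> \<noteq> 0"
      then obtain bg where "bg \<in> A" "\<alpha> = g bg" using supp by auto
      then show "(\<Sum>i\<in>{1..n}. \<alpha> i) = d + e" using h unfolding homogeneous_def A_def g_def
        by (auto simp: sum.distrib)
    qed
  qed
qed


definition pf :: "nat \<Rightarrow> ((nat \<Rightarrow> complex) \<Rightarrow> complex) \<Rightarrow> bool" where
  "pf n f \<longleftrightarrow> (\<exists>c. is_mpoly n c \<and> (\<forall>x. meval n c x = f x))"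

definition hpf :: "nat \<Rightarrow> nat \<Rightarrow> ((nat \<Rightarrow> complex) \<Rightarrow> complex) \<Rightarrow> bool" where
  "hpf n d f \<longleftrightarrow> (\<exists>c. is_mpoly n c \<and> homogeneous n d c \<and> (\<forall>x. meval n c x = f x))"

lemma pf_const: "pf n (\<lambda>_. k)"
  unfolding pf_def using mconst_ok by blast

lemma pf_var: "i \<in> {1..n} \<Longrightarrow> pf n (\<lambda>x. x i)"
  unfolding pf_def using mvar_ok by blast

lemma pf_add: "pf n f \<Longrightarrow> pf n g \<Longrightarrow> pf n (\<lambda>x. f x + g x)"
  unfolding pf_def using madd_ok by metis

lemma pf_mult: "pf n f \<Longrightarrow> pf n g \<Longrightarrow> pf n (\<lambda>x. f x * g x)"
  unfolding pf_def using mmul_ok by metis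

lemma pf_cmult: "pf n f \<Longrightarrow> pf n (\<lambda>x. k * f x)"
  using pf_mult[OF pf_const] by blast

lemma pf_diff: "pf n f \<Longrightarrow> pf n g \<Longrightarrow> pf n (\<lambda>x. f x - g x)"
  using pf_add[of n f "\<lambda>x. (-1) * g x"] pf_cmult[of n g "-1"] by simp

lemma pf_sum: "(\<And>a. a \<in> A \<Longrightarrow> pf n (f a)) \<Longrightarrow> pf n (\<lambda>x. \<Sum>a\<in>A. f a x)"
proof (induction A rule: infinite_finite_induct)
  case (infinite A) then show ?case by (simp add: pf_const)
next
  case empty then show ?case by (simp add: pf_const)
next
  case (insert a A) then show ?case by (simp add: pf_add)
qed

lemma pf_prod: "(\<And>a. a \<in> A \<Longrightarrow> pf n (f a)) \<Longrightarrow> pf n (\<lambda>x. \<Prod>a\<in>A. f a x)"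
proof (induction A rule: infinite_finite_induct)
  case (infinite A) then show ?case by (simp add: pf_const)
next
  case empty then show ?case by (simp add: pf_const)
next
  case (insert a A) then show ?case by (simp add: pf_mult)
qed

lemma pf_power: "pf n f \<Longrightarrow> pf n (\<lambda>x. f x ^ k)"
  by (induction k) (simp_all add: pf_const pf_mult)

lemma pf_compose:
  assumes "pf n g" "\<And>j. j \<in> {1..n} \<Longrightarrow> pf n (h j)"
  shows "pf n (\<lambda>x. g (\<lambda>j. h j x))"
proof -
  obtain c where c: "is_mpoly n c" "\<And>x. meval n c x = g x" using assms(1) unfolding pf_def by blast
  have "g (\<lambda>j. h j x) = (\<Sum>\<alpha> | c \<alpha> \<noteq> 0. c \<alpha> * (\<Prod>i\<in>{1..n}. h i x ^ \<alpha> i))" for x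
    using c(2)[of "\<lambda>j. h j x"] by (simp add: meval_def)
  moreover have "pf n (\<lambda>x. \<Sum>\<alpha> | c \<alpha> \<noteq> 0. c \<alpha> * (\<Prod>i\<in>{1..n}. h i x ^ \<alpha> i))"
    by (intro pf_sum pf_cmult pf_prod pf_power assms(2))
  ultimately show ?thesis by simp
qed

lemma hpf_zero: "hpf n d (\<lambda>_. 0)"
  unfolding hpf_def
  by (rule exI[of _ "\<lambda>_. 0"]) (simp add: is_mpoly_def homogeneous_def meval_def)

lemma hpf_const: "hpf n 0 (\<lambda>_. k)"
  unfolding hpf_def using mconst_ok by blast

lemma hpf_var: "i \<in> {1..n} \<Longrightarrow> hpf n 1 (\<lambda>x. x i)"
  unfolding hpf_def using mvar_ok by blast

lemma hpf_add: "hpf n d f \<Longrightarrow> hpf n d g \<Longrightarrow> hpf n d (\<lambda>x. f x + g x)"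
  unfolding hpf_def using madd_ok by metis

lemma hpf_mult: "hpf n d f \<Longrightarrow> hpf n e g \<Longrightarrow> hpf n (d + e) (\<lambda>x. f x * g x)"
  unfolding hpf_def using mmul_ok by metis

lemma hpf_sum: "(\<And>a. a \<in> A \<Longrightarrow> hpf n d (f a)) \<Longrightarrow> hpf n d (\<lambda>x. \<Sum>a\<in>A. f a x)"
proof (induction A rule: infinite_finite_induct)
  case (infinite A) then show ?case by (simp add: hpf_zero)
next
  case empty then show ?case by (simp add: hpf_zero)
next
  case (insert a A) then show ?case by (simp add: hpf_add)
qed

lemma hpf_prod: "finite A \<Longrightarrow> (\<And>a. a \<in> A \<Longrightarrow> hpf n d (f a)) \<Longrightarrow> hpf n (d * card A) (\<lambda>x. \<Prod>a\<in>A. f a x)"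
proof (induction A rule: finite_induct)
  case empty then show ?case by (simp add: hpf_const)
next
  case (insert a A)
  then have "hpf n (d + d * card A) (\<lambda>x. f a x * (\<Prod>a\<in>A. f a x))" by (intro hpf_mult) auto
  then show ?case using insert by simp
qed

lemma hpf_pf: "hpf n d f \<Longrightarrow> pf n f"
  unfolding hpf_def pf_def by blast

lemma meval_deriv:
  assumes c: "is_mpoly n c" and i: "i \<in> {1..n}"
  shows "((\<lambda>t. meval n c (x(i:=t))) has_field_derivative meval n (mderiv i c) x) (at (x i))"
proof -
  define S where "S = {\<alpha>. c \<alpha> \<noteq> 0}"
  have fS: "finite S" using c by (simp add: is_mpoly_def S_def)
  define P where "P = (\<lambda>\<alpha>. \<Prod>j\<in>{1..n}-{i}. x j ^ \<alpha> j)"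
  have split: "mono n \<alpha> (x(i:=t)) = t ^ \<alpha> i * P \<alpha>" for \<alpha> t
  proof -
    have "mono n \<alpha> (x(i:=t)) = (x(i:=t)) i ^ \<alpha> i * (\<Prod>j\<in>{1..n}-{i}. (x(i:=t)) j ^ \<alpha> j)"
      unfolding mono_def using i by (simp add: prod.remove)
    also have "(\<Prod>j\<in>{1..n}-{i}. (x(i:=t)) j ^ \<alpha> j) = P \<alpha>"
      unfolding P_def by (rule prod.cong) auto
    finally show ?thesis by (metis fun_upd_same)
  qed
  have ev: "meval n c (x(i:=t)) = (\<Sum>\<alpha>\<in>S. c \<alpha> * (t ^ \<alpha> i * P \<alpha>))" for t
    by (simp add: meval_mono S_def split)
  have D: "((\<lambda>t. \<Sum>\<alpha>\<in>S. c \<alpha> * (t ^ \<alpha> i * P \<alpha>)) has_field_derivative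
      (\<Sum>\<alpha>\<in>S. c \<alpha> * (of_nat (\<alpha> i) * x i ^ (\<alpha> i - 1) * P \<alpha>))) (at (x i))"
  proof (intro DERIV_sum DERIV_cmult)
    fix \<alpha>
    show "((\<lambda>t. t ^ \<alpha> i * P \<alpha>) has_field_derivative of_nat (\<alpha> i) * x i ^ (\<alpha> i - 1) * P \<alpha>) (at (x i))"
      by (rule DERIV_cong[OF DERIV_mult[OF DERIV_power[OF DERIV_ident] DERIV_const]]) simp
  qed
  define B where "B = {\<alpha>\<in>S. \<alpha> i \<noteq> 0}"
  define h where "h = (\<lambda>\<alpha>::nat\<Rightarrow>nat. \<alpha>(i := \<alpha> i - 1))"
  have fB: "finite B" using fS by (simp add: B_def)
  have suppD: "{\<beta>. mderiv i c \<beta> \<noteq> 0} \<subseteq> h ` B"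
  proof
    fix \<beta> assume "\<beta> \<in> {\<beta>. mderiv i c \<beta> \<noteq> 0}"
    then have "c (\<beta>(i := \<beta> i + 1)) \<noteq> 0" by (auto simp: mderiv_def)
    then have "\<beta>(i := \<beta> i + 1) \<in> B" by (auto simp: B_def S_def)
    moreover have "\<beta> = h (\<beta>(i := \<beta> i + 1))" by (auto simp: h_def)
    ultimately show "\<beta> \<in> h ` B" by blast
  qed
  have inj: "inj_on h B"
  proof
    fix a b assume ab: "a \<in> B" "b \<in> B" "h a = h b"
    show "a = b"
    proof
      fix j
      have e: "h a j = h b j" using ab(3) by simp
      show "a j = b j"
      proof (cases "j = i")
        case True
        then have "a i - 1 = b i - 1" using e by (simp add: h_def)
        moreover have "a i \<noteq> 0" "b i \<noteq> 0" using ab(1,2) by (auto simp: B_def)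
        ultimately show ?thesis using True by simp
      next
        case False
        then show ?thesis using e by (simp add: h_def)
      qed
    qed
  qed
  have "meval n (mderiv i c) x = (\<Sum>\<beta>\<in>h ` B. mderiv i c \<beta> * mono n \<beta> x)"
    by (rule meval_superset[OF _ suppD]) (use fB in simp)
  also have "\<dots> = (\<Sum>\<alpha>\<in>B. mderiv i c (h \<alpha>) * mono n (h \<alpha>) x)"
    by (rule sum.reindex[OF inj, unfolded comp_def])
  also have "\<dots> = (\<Sum>\<alpha>\<in>B. c \<alpha> * (of_nat (\<alpha> i) * x i ^ (\<alpha> i - 1) * P \<alpha>))"
  proof (rule sum.cong[OF refl])
    fix \<alpha> assume a: "\<alpha> \<in> B"
    have e1: "(h \<alpha>)(i := \<alpha> i) = \<alpha>" using a by (auto simp: h_def B_def)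
    have e2: "mono n (h \<alpha>) x = x i ^ (\<alpha> i - 1) * P \<alpha>"
    proof -
      have "mono n (h \<alpha>) x = mono n (h \<alpha>) (x(i := x i))" by simp
      also have "\<dots> = x i ^ (\<alpha> i - 1) * P (h \<alpha>)" by (subst split) (simp add: h_def)
      also have "P (h \<alpha>) = P \<alpha>" unfolding P_def h_def by (rule prod.cong) auto
      finally show ?thesis .
    qed
    have e3: "h \<alpha> i + 1 = \<alpha> i" using a by (auto simp: h_def B_def)
    show "mderiv i c (h \<alpha>) * mono n (h \<alpha>) x = c \<alpha> * (of_nat (\<alpha> i) * x i ^ (\<alpha> i - 1) * P \<alpha>)"
      unfolding mderiv_def e1 e2 e3 by simp
  qed
  also have "\<dots> = (\<Sum>\<alpha>\<in>S. c \<alpha> * (of_nat (\<alpha> i) * x i ^ (\<alpha> i - 1) * P \<alpha>))"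
    by (rule sum.mono_neutral_left) (auto simp: B_def fS)
  finally have eq: "meval n (mderiv i c) x = \<dots>" .
  show ?thesis unfolding ev eq by (rule D)
qed


section \<open>Power series\<close>

notation fps_nth (infixl \<open>$$\<close> 75)

definition Uf :: "nat \<Rightarrow> (nat \<Rightarrow> complex) \<Rightarrow> complex fps" where
  "Uf n y = Abs_fps (\<lambda>j. if j = 0 then 1 else if j \<le> n then y j else 0)"

definition Phi :: "nat \<Rightarrow> complex \<Rightarrow> (nat \<Rightarrow> complex) \<Rightarrow> complex fps" where
  "Phi n e y = fps_binomial e oo (Uf n y - 1)"

lemma Uf_nth: "Uf n y $$ j = (if j = 0 then 1 else if j \<le> n then y j else 0)"
  by (simp add: Uf_def)

lemma Uf0: "(Uf n y - 1) $$ 0 = 0"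
  by (simp add: Uf_nth)

lemma Uf_nz: "Uf n y \<noteq> 0"
proof
  assume "Uf n y = 0"
  then have "Uf n y $$ 0 = 0" by simp
  then show False by (simp add: Uf_nth)
qed

lemma Phi_mult: "Phi n e y * Phi n f y = Phi n (e + f) y"
  unfolding Phi_def fps_binomial_add_mult fps_compose_mult_distrib[OF Uf0] ..

lemma Phi_1: "Phi n 1 y = Uf n y"
  unfolding Phi_def fps_binomial_1 fps_compose_add_distrib fps_compose_1
  using fps_X_fps_compose_startby0[OF Uf0] by simp

lemma Phi_0: "Phi n 0 y = 1"
  unfolding Phi_def by simp

lemma Phi_nth0: "Phi n e y $$ 0 = 1"
  unfolding Phi_def by simp

lemma Phi_U: "Uf n y * Phi n e y = Phi n (e + 1) y"
  using Phi_mult[of n 1 y e] by (simp add: Phi_1 add.commute)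

lemma Phi_deriv: "fps_deriv (Phi n e y) = fps_const e * fps_deriv (Uf n y) * Phi n (e - 1) y"
proof -
  define B where "B = fps_binomial e"
  define W where "W = Uf n y - 1"
  have W0: "W $$ 0 = 0" using Uf0 by (simp add: W_def)
  have u: "(1 + fps_X :: complex fps) $$ 0 \<noteq> 0" by simp
  have "(1 + fps_X) * fps_deriv B = fps_const e * B"
  proof -
    have "fps_deriv B = fps_const e * B / (1 + fps_X)" unfolding B_def by (rule fps_binomial_deriv)
    then have "(1 + fps_X) * fps_deriv B = (1 + fps_X) * (fps_const e * B * inverse (1 + fps_X))"
      by (simp add: fps_divide_unit[OF u])
    also have "\<dots> = fps_const e * B * ((1 + fps_X) * inverse (1 + fps_X))" by (simp add: ac_simps)
    also have "\<dots> = fps_const e * B" using inverse_mult_eq_1'[OF u] by simp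
    finally show ?thesis .
  qed
  then have "((1 + fps_X) * fps_deriv B) oo W = (fps_const e * B) oo W" by simp
  then have key: "Uf n y * (fps_deriv B oo W) = fps_const e * Phi n e y"
    unfolding fps_compose_mult_distrib[OF W0] fps_compose_add_distrib fps_compose_1
      fps_X_fps_compose_startby0[OF W0] Phi_def B_def[symmetric] W_def[symmetric]
    by (simp add: W_def fps_compose_mult_distrib[OF W0])
  have d: "fps_deriv (Phi n e y) = (fps_deriv B oo W) * fps_deriv (Uf n y)"
    unfolding Phi_def B_def[symmetric] W_def[symmetric] fps_compose_deriv[OF W0]
    by (simp add: W_def)
  have A: "Uf n y * fps_deriv (Phi n e y) = fps_const e * Phi n e y * fps_deriv (Uf n y)"
    unfolding d using key by (simp add: mult.assoc[symmetric])
  have B: "Uf n y * Phi n (e - 1) y = Phi n e y" using Phi_U[of n y "e - 1"] by simp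
  have "Uf n y * (fps_const e * fps_deriv (Uf n y) * Phi n (e - 1) y) =
      fps_const e * fps_deriv (Uf n y) * (Uf n y * Phi n (e - 1) y)" by (simp add: ac_simps)
  also have "\<dots> = fps_const e * fps_deriv (Uf n y) * Phi n e y" by (simp only: B)
  also have "\<dots> = Uf n y * fps_deriv (Phi n e y)" using A by (simp add: ac_simps)
  finally have "Uf n y * (fps_const e * fps_deriv (Uf n y) * Phi n (e - 1) y) = Uf n y * fps_deriv (Phi n e y)" .
  then show ?thesis using Uf_nz mult_left_cancel by metis
qed

definition Lrec :: "complex \<Rightarrow> complex fps \<Rightarrow> complex fps \<Rightarrow> nat \<Rightarrow> complex" where
  "Lrec e U A k = of_nat k * A $$ k - (\<Sum>j=1..k. (e * of_nat j - of_nat (k - j)) * U $$ j * A $$ (k - j))"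

lemma Lrec_coeff:
  assumes U0: "U $$ 0 = 1"
  shows "(U * fps_deriv A - fps_const e * fps_deriv U * A) $$ m = Lrec e U A (Suc m)"
proof -
  have s1: "(U * fps_deriv A) $$ m = of_nat (Suc m) * A $$ Suc m +
      (\<Sum>j=1..Suc m. of_nat (Suc m - j) * U $$ j * A $$ (Suc m - j))"
  proof -
    have "(U * fps_deriv A) $$ m = (\<Sum>i=0..m. U $$ i * (of_nat (m - i + 1) * A $$ (m - i + 1)))"
      by (simp add: fps_mult_nth)
    also have "\<dots> = U $$ 0 * (of_nat (m + 1) * A $$ (m + 1)) + (\<Sum>i=1..m. U $$ i * (of_nat (m - i + 1) * A $$ (m - i + 1)))"
      by (simp add: sum.atLeast_Suc_atMost)
    also have "(\<Sum>i=1..m. U $$ i * (of_nat (m - i + 1) * A $$ (m - i + 1))) =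
        (\<Sum>j=1..m. of_nat (Suc m - j) * U $$ j * A $$ (Suc m - j))"
      by (rule sum.cong) (auto simp: Suc_diff_le)
    also have "\<dots> = (\<Sum>j=1..Suc m. of_nat (Suc m - j) * U $$ j * A $$ (Suc m - j))"
      by simp
    finally show ?thesis using U0 by simp
  qed
  have s2: "(fps_deriv U * A) $$ m = (\<Sum>j=1..Suc m. of_nat j * U $$ j * A $$ (Suc m - j))"
  proof -
    have "(fps_deriv U * A) $$ m = (\<Sum>i=0..m. of_nat (i + 1) * U $$ (i + 1) * A $$ (m - i))"
      by (simp add: fps_mult_nth)
    also have "\<dots> = (\<Sum>j=Suc 0..Suc m. of_nat j * U $$ j * A $$ (Suc m - j))"
      by (subst sum.shift_bounds_cl_Suc_ivl) simp
    finally show ?thesis by simp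
  qed
  have "(U * fps_deriv A - fps_const e * fps_deriv U * A) $$ m =
      (U * fps_deriv A) $$ m - e * (fps_deriv U * A) $$ m"
    by (simp add: mult.assoc)
  also have "\<dots> = Lrec e U A (Suc m)"
    unfolding s1 s2 Lrec_def sum_distrib_left
    by (simp add: algebra_simps sum_subtractf[symmetric] sum.distrib[symmetric])
  finally show ?thesis .
qed

lemma Phi_rec: "k \<ge> 1 \<Longrightarrow> Lrec e (Uf n y) (Phi n e y) k = 0"
proof -
  assume "k \<ge> 1"
  then obtain m where k: "k = Suc m" by (cases k) auto
  have "Uf n y * fps_deriv (Phi n e y) - fps_const e * fps_deriv (Uf n y) * Phi n e y = 0"
  proof -
    have "Uf n y * fps_deriv (Phi n e y) = fps_const e * fps_deriv (Uf n y) * (Uf n y * Phi n (e - 1) y)"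
      by (simp add: Phi_deriv ac_simps)
    also have "Uf n y * Phi n (e - 1) y = Phi n e y" by (simp add: Phi_U)
    finally show ?thesis by simp
  qed
  then show ?thesis using Lrec_coeff[of "Uf n y" "Phi n e y" e m] k by (simp add: Uf_nth)
qed


lemma Phi_rec_fun:
  assumes "k \<ge> 1"
  shows "Phi n e y $$ k = (1 / of_nat k) * (\<Sum>j=1..k. (e * of_nat j - of_nat (k - j)) * Uf n y $$ j * Phi n e y $$ (k - j))"
  using Phi_rec[OF assms, of e n y] assms unfolding Lrec_def by (simp add: field_simps)

section \<open>Weighted polynomial functions\<close>

inductive wpf :: "nat \<Rightarrow> nat \<Rightarrow> ((nat \<Rightarrow> complex) \<Rightarrow> complex) \<Rightarrow> bool" for n where
  wconst: "wpf n 0 (\<lambda>_. c)"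
| wzero: "wpf n d (\<lambda>_. 0)"
| wvar: "j \<in> {1..n} \<Longrightarrow> wpf n j (\<lambda>y. y j)"
| wadd: "wpf n d f \<Longrightarrow> wpf n d g \<Longrightarrow> wpf n d (\<lambda>y. f y + g y)"
| wmult: "wpf n d f \<Longrightarrow> wpf n d' g \<Longrightarrow> wpf n (d + d') (\<lambda>y. f y * g y)"

lemma wpf_pf: "wpf n d f \<Longrightarrow> pf n f"
  by (induction rule: wpf.induct) (auto intro: pf_const pf_var pf_add pf_mult)

lemma wpf_sum: "(\<And>a. a \<in> A \<Longrightarrow> wpf n d (f a)) \<Longrightarrow> wpf n d (\<lambda>x. \<Sum>a\<in>A. f a x)"
proof (induction A rule: infinite_finite_induct)
  case (infinite A) then show ?case by (simp add: wzero)
next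
  case empty then show ?case by (simp add: wzero)
next
  case (insert a A) then show ?case by (simp add: wadd)
qed

lemma wpf_eq: "wpf n d f \<Longrightarrow> d = d' \<Longrightarrow> wpf n d' f"
  by simp

lemma hpf_sq: "i \<in> {1..n} \<Longrightarrow> hpf n 2 (\<lambda>x. x i * x i)"
proof -
  assume i: "i \<in> {1..n}"
  have "hpf n (1 + 1) (\<lambda>x. x i * x i)" by (rule hpf_mult[OF hpf_var[OF i] hpf_var[OF i]])
  then show ?thesis by (simp only: one_add_one)
qed

lemma hpf_u_inv: "hpf n (2 * k) (\<lambda>p. u_inv n k p)"
  unfolding u_inv_def
proof (rule hpf_sum)
  fix S assume S: "S \<in> {S. S \<subseteq> {1..n} \<and> card S = k}"
  then have fS: "finite S" using finite_subset by blast
  have "hpf n (2 * card S) (\<lambda>x. \<Prod>i\<in>S. x i * x i)"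
    by (rule hpf_prod[OF fS]) (use S in \<open>auto intro!: hpf_sq\<close>)
  then show "hpf n (2 * k) (\<lambda>x. \<Prod>i\<in>S. (x i)\<^sup>2)" using S by (simp add: power2_eq_square)
qed

lemma wpf_hpf: "wpf n d f \<Longrightarrow> hpf n (2 * d) (\<lambda>p. f (u_vec n p))"
proof (induction rule: wpf.induct)
  case (wconst c) then show ?case by (simp add: hpf_const)
next
  case (wzero d) then show ?case by (simp add: hpf_zero)
next
  case (wvar j) then show ?case by (simp add: u_vec_def hpf_u_inv)
next
  case (wadd d f g) then show ?case by (simp add: hpf_add)
next
  case (wmult d f d' g) then show ?case using hpf_mult[of n "2*d" _ "2*d'"] by (simp add: distrib_left)
qed

lemma wpf_Uf: "j \<ge> 1 \<Longrightarrow> wpf n j (\<lambda>y. Uf n y $$ j)"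
proof -
  assume j: "j \<ge> 1"
  show ?thesis
  proof (cases "j \<le> n")
    case True
    then have "(\<lambda>y. Uf n y $$ j) = (\<lambda>y. y j)" using j by (simp add: Uf_nth)
    then show ?thesis using wvar[of j n] j True by simp
  next
    case False
    then have "(\<lambda>y. Uf n y $$ j) = (\<lambda>y. 0)" using j by (simp add: Uf_nth)
    then show ?thesis by (simp add: wzero)
  qed
qed

lemma wpf_Phi: "wpf n k (\<lambda>y. Phi n e y $$ k)"
proof (induction k rule: less_induct)
  case (less k)
  show ?case
  proof (cases "k = 0")
    case True
    then show ?thesis by (simp add: Phi_nth0 wconst)
  next
    case False
    then have k1: "k \<ge> 1" by simp
    have "wpf n (0 + k) (\<lambda>y. (1 / of_nat k) * (\<Sum>j=1..k. (e * of_nat j - of_nat (k - j)) * Uf n y $$ j * Phi n e y $$ (k - j)))"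
    proof (intro wmult wconst wpf_sum)
      fix j assume j: "j \<in> {1..k}"
      have "wpf n (0 + (j + (k - j))) (\<lambda>y. (e * of_nat j - of_nat (k - j)) * (Uf n y $$ j * Phi n e y $$ (k - j)))"
        using j by (intro wmult wconst wpf_Uf less) auto
      then show "wpf n k (\<lambda>y. (e * of_nat j - of_nat (k - j)) * Uf n y $$ j * Phi n e y $$ (k - j))"
        using j by (simp add: mult.assoc)
    qed
    then show ?thesis using Phi_rec_fun[OF k1] by simp
  qed
qed

lemma G_identity:
  "Uf n y * fps_deriv (fps_const e * (fps_X ^ i * Phi n (e - 1) y)) -
     fps_const e * fps_deriv (Uf n y) * (fps_const e * (fps_X ^ i * Phi n (e - 1) y)) =
   fps_const e * fps_deriv (fps_X ^ i) * Phi n e y - fps_X ^ i * fps_deriv (Phi n e y)"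
proof -
  define Q where "Q = Phi n (e - 2) y"
  define U where "U = Uf n y"
  have m2: "Phi n (e - 1) y = U * Q" using Phi_U[of n y "e - 2"] by (simp add: Q_def U_def)
  have m1: "Phi n e y = U * U * Q" using Phi_U[of n y "e - 1"] m2 by (simp add: U_def mult.assoc)
  have c1: "fps_const (e - 1) = fps_const e - (1::complex fps)" by (rule fps_ext) simp
  have d1: "fps_deriv (Phi n (e - 1) y) = (fps_const e - 1) * fps_deriv U * Q"
    using Phi_deriv[of n "e - 1" y] unfolding c1 by (simp add: Q_def U_def)
  have d0: "fps_deriv (Phi n e y) = fps_const e * fps_deriv U * (U * Q)"
    using Phi_deriv[of n e y] m2 by (simp add: U_def)
  show ?thesis
    apply (simp only: fps_deriv_mult_const_left fps_deriv_mult d1 d0)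
    apply (simp only: U_def[symmetric] m1 m2)
    apply (simp add: algebra_simps)
    done
qed

lemma sum_delta_mult:
  "finite A \<Longrightarrow> (\<Sum>j\<in>A. f j * (if j = i then 1 else 0) * g j) = (if i \<in> A then f i * g i else (0::complex))"
proof -
  assume A: "finite A"
  have "(\<Sum>j\<in>A. f j * (if j = i then 1 else 0) * g j) = (\<Sum>j\<in>A. if j = i then f j * g j else 0)"
    by (rule sum.cong) auto
  then show ?thesis using A by (simp add: sum.delta')
qed

lemma Lrec_G:
  assumes k: "k \<ge> 1" and i: "i \<ge> 1"
  shows "Lrec e (Uf n y) (fps_const e * (fps_X ^ i * Phi n (e - 1) y)) k =
    (\<Sum>j=1..k. (e * of_nat j - of_nat (k - j)) * (if j = i then 1 else 0) * Phi n e y $$ (k - j))"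
proof -
  obtain m where m: "k = Suc m" using k by (cases k) auto
  have U0: "Uf n y $$ 0 = 1" by (simp add: Uf_nth)
  have "Lrec e (Uf n y) (fps_const e * (fps_X ^ i * Phi n (e - 1) y)) k =
     (Uf n y * fps_deriv (fps_const e * (fps_X ^ i * Phi n (e - 1) y)) -
     fps_const e * fps_deriv (Uf n y) * (fps_const e * (fps_X ^ i * Phi n (e - 1) y))) $$ m"
    using Lrec_coeff[OF U0, of "fps_const e * (fps_X ^ i * Phi n (e - 1) y)" e m] unfolding m by (rule sym)
  also have "\<dots> = (fps_const e * fps_deriv (fps_X ^ i) * Phi n e y - fps_X ^ i * fps_deriv (Phi n e y)) $$ m"
    by (simp only: G_identity)
  also have "\<dots> = e * of_nat i * (fps_X ^ (i - 1) * Phi n e y) $$ m - (fps_X ^ i * fps_deriv (Phi n e y)) $$ m"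
    by (simp add: fps_deriv_power mult.assoc)
  also have "\<dots> = (if i \<le> k then (e * of_nat i - of_nat (k - i)) * Phi n e y $$ (k - i) else 0)"
    unfolding fps_X_power_mult_nth using i m
    by (cases "i \<le> m"; cases "i = Suc m") (auto simp: Suc_diff_le algebra_simps)
  also have "\<dots> = (\<Sum>j=1..k. (e * of_nat j - of_nat (k - j)) * (if j = i then 1 else 0) * Phi n e y $$ (k - j))"
    using i by (simp add: sum_delta_mult)
  finally show ?thesis .
qed


lemma Uf_deriv_coord:
  assumes i: "i \<in> {1..n}" and j: "j \<ge> 1"
  shows "((\<lambda>t. Uf n (y(i:=t)) $$ j) has_field_derivative (if j = i then 1 else 0)) (at (y i))"
proof (cases "j = i")
  case True
  then have "(\<lambda>t. Uf n (y(i:=t)) $$ j) = (\<lambda>t. t)" using i by (auto simp: Uf_nth)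
  then show ?thesis using True by simp
next
  case False
  then have "(\<lambda>t. Uf n (y(i:=t)) $$ j) = (\<lambda>t. Uf n y $$ j)" using i j by (auto simp: Uf_nth)
  then show ?thesis using False by simp
qed

lemma Phi_deriv_coord:
  assumes i: "i \<in> {1..n}"
  shows "((\<lambda>t. Phi n e (y(i:=t)) $$ k) has_field_derivative
           (fps_const e * (fps_X ^ i * Phi n (e - 1) y)) $$ k) (at (y i))"
proof (induction k rule: less_induct)
  case (less k)
  define H where "H = fps_const e * (fps_X ^ i * Phi n (e - 1) y)"
  define c where "c = (\<lambda>j. e * of_nat j - of_nat (k - j) :: complex)"
  show ?case
  proof (cases "k = 0")
    case True
    have f1: "(\<lambda>t. Phi n e (y(i:=t)) $$ k) = (\<lambda>t. 1)" using True by (simp add: Phi_nth0)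
    have h0: "(fps_const e * (fps_X ^ i * Phi n (e - 1) y)) $$ k = 0"
      using True i by (simp add: fps_X_power_mult_nth)
    show ?thesis unfolding f1 h0 by (rule DERIV_const)
  next
    case False
    then have k1: "k \<ge> 1" by simp
    have funeq: "(\<lambda>t. Phi n e (y(i:=t)) $$ k) = (\<lambda>t. (1 / of_nat k) *
        (\<Sum>j=1..k. c j * (Uf n (y(i:=t)) $$ j * Phi n e (y(i:=t)) $$ (k - j))))"
      by (rule ext, subst Phi_rec_fun[OF k1]) (simp add: c_def mult.assoc)
    have D: "((\<lambda>t. (1 / of_nat k) *
        (\<Sum>j=1..k. c j * (Uf n (y(i:=t)) $$ j * Phi n e (y(i:=t)) $$ (k - j)))) has_field_derivative
        (1 / of_nat k) * (\<Sum>j=1..k. c j * (Uf n y $$ j * H $$ (k - j) + (if j = i then 1 else 0) * Phi n e y $$ (k - j))))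
        (at (y i))"
    proof (intro DERIV_cmult DERIV_sum)
      fix j assume j: "j \<in> {1..k}"
      have "((\<lambda>t. Uf n (y(i:=t)) $$ j * Phi n e (y(i:=t)) $$ (k - j)) has_field_derivative
          Uf n (y(i:=y i)) $$ j * H $$ (k - j) + (if j = i then 1 else 0) * Phi n e (y(i:=y i)) $$ (k - j)) (at (y i))"
        using j by (intro DERIV_mult' Uf_deriv_coord[OF i] less[unfolded H_def[symmetric]]) auto
      then show "((\<lambda>t. Uf n (y(i:=t)) $$ j * Phi n e (y(i:=t)) $$ (k - j)) has_field_derivative
          Uf n y $$ j * H $$ (k - j) + (if j = i then 1 else 0) * Phi n e y $$ (k - j)) (at (y i))"
        by simp
    qed
    have L1: "Lrec e (Uf n y) H k = (\<Sum>j=1..k. c j * (if j = i then 1 else 0) * Phi n e y $$ (k - j))"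
      unfolding H_def c_def using Lrec_G[OF k1, of i e n y] i by simp
    have L2: "Lrec e (Uf n y) H k = of_nat k * H $$ k - (\<Sum>j=1..k. c j * Uf n y $$ j * H $$ (k - j))"
      by (simp add: Lrec_def c_def)
    have L3: "(\<Sum>j=1..k. c j * (Uf n y $$ j * H $$ (k - j) + (if j = i then 1 else 0) * Phi n e y $$ (k - j))) =
        (\<Sum>j=1..k. c j * Uf n y $$ j * H $$ (k - j)) + (\<Sum>j=1..k. c j * (if j = i then 1 else 0) * Phi n e y $$ (k - j))"
      unfolding sum.distrib[symmetric] by (rule sum.cong) (simp_all add: algebra_simps)
    have "of_nat k * H $$ k = (\<Sum>j=1..k. c j * (Uf n y $$ j * H $$ (k - j) + (if j = i then 1 else 0) * Phi n e y $$ (k - j)))"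
      using L1 L2 L3 by (simp add: algebra_simps)
    then have val: "(1 / of_nat k) * (\<Sum>j=1..k. c j * (Uf n y $$ j * H $$ (k - j) + (if j = i then 1 else 0) * Phi n e y $$ (k - j))) = H $$ k"
      using k1 by (simp add: field_simps)
    show ?thesis unfolding funeq H_def[symmetric] using D val by simp
  qed
qed


definition Wf :: "nat \<Rightarrow> (nat \<Rightarrow> complex) \<Rightarrow> complex fps" where
  "Wf n y = fps_const (1 / (of_nat n - 1)) * (fps_const (of_nat n - 1) * Uf n y - fps_X * fps_deriv (Uf n y))"

lemma Wf_nth: "Wf n y $$ m = (of_nat n - 1 - of_nat m) / (of_nat n - 1) * Uf n y $$ m"
proof -
  have x: "(fps_X * fps_deriv (Uf n y)) $$ m = of_nat m * Uf n y $$ m" by (cases m) simp_all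
  have "Wf n y $$ m = (1 / (of_nat n - 1)) * ((of_nat n - 1) * Uf n y $$ m - of_nat m * Uf n y $$ m)"
    unfolding Wf_def by (simp add: x)
  also have "\<dots> = (of_nat n - 1 - of_nat m) / (of_nat n - 1) * Uf n y $$ m"
    by (simp add: left_diff_distrib)
  finally show ?thesis .
qed

lemma final_coeff:
  assumes n: "n \<ge> 2"
  shows "(Phi n (of_nat d / (of_nat n - 1) - 1) y * Wf n y) $$ d = (if d = 0 then 1 else 0)"
proof -
  define E where "E = (of_nat d / (of_nat n - 1) :: complex)"
  define U where "U = Uf n y"
  have n1: "(of_nat n - 1 :: complex) \<noteq> 0" using n by (metis of_nat_1 of_nat_eq_iff right_minus_eq Suc_1 Suc_n_not_le_n)
  have eq: "Phi n (E - 1) y * Wf n y = fps_const (1 / (of_nat n - 1)) *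
      (fps_const (of_nat n - 1) * Phi n E y - fps_X * (fps_deriv U * Phi n (E - 1) y))"
    using Phi_U[of n y "E - 1"] by (simp add: Wf_def U_def algebra_simps)
  have dE: "fps_deriv (Phi n E y) = fps_const E * (fps_deriv U * Phi n (E - 1) y)"
    by (simp add: Phi_deriv U_def mult.assoc)
  show ?thesis
  proof (cases "d = 0")
    case True
    then show ?thesis unfolding E_def[symmetric] eq using n1 by (simp add: Phi_nth0)
  next
    case False
    then obtain m where m: "d = Suc m" by (cases d) auto
    have "of_nat d * Phi n E y $$ d = E * (fps_deriv U * Phi n (E - 1) y) $$ m"
      using arg_cong[OF dE, of "\<lambda>f. f $$ m"] m by simp
    moreover have dE': "of_nat d = E * (of_nat n - 1)" using n1 by (simp add: E_def)
    ultimately have "E * ((of_nat n - 1) * Phi n E y $$ d) = E * (fps_deriv U * Phi n (E - 1) y) $$ m"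
      by (simp add: mult.assoc)
    moreover have "E \<noteq> 0" using False n1 by (simp add: E_def)
    ultimately have "(fps_deriv U * Phi n (E - 1) y) $$ m = (of_nat n - 1) * Phi n E y $$ d"
      by simp
    then show ?thesis unfolding E_def[symmetric] eq using False m n1 by simp
  qed
qed

lemma eta_W:
  assumes n: "n \<ge> 2" and i: "i \<in> {1..n}" and j: "j \<in> {1..n}"
  shows "eta n i j y = (if n + 1 \<le> i + j then Wf n y $$ (i + j - n - 1) else 0)"
proof -
  have n1: "(of_nat (n - 1) :: complex) = of_nat n - 1" using n by (simp add: of_nat_diff)
  show ?thesis
  proof (cases "n + 1 \<le> i + j")
    case False
    then show ?thesis by (simp add: eta_def Let_def)
  next
    case True
    define m where "m = i + j - n - 1"
    have k: "int i + int j - int n - 1 = int m" using True by (simp add: m_def)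
    have c: "(of_int (2 * int n - int i - int j) :: complex) = of_nat n - 1 - of_nat m"
    proof -
      have "2 * int n - int i - int j = int n - 1 - int m" using True by (simp add: m_def)
      then show ?thesis by (metis of_int_diff of_int_of_nat_eq of_int_1)
    qed
    have mn: "m \<le> n" using i j unfolding m_def atLeastAtMost_iff by arith
    have "eta n i j y = (of_nat n - 1 - of_nat m) / (of_nat n - 1) * (if m = 0 then 1 else y m)"
      unfolding eta_def Let_def k c n1 by simp
    also have "\<dots> = Wf n y $$ m" unfolding Wf_nth using mn by (simp add: Uf_nth)
    finally show ?thesis using True by (simp add: m_def)
  qed
qed


lemma sum_reflect:
  fixes c D n :: nat
  assumes "1 \<le> c - D" "D \<le> c" "c \<le> n" "\<And>i. i \<in> {1..n} \<Longrightarrow> i < c - D \<or> c < i \<Longrightarrow> F i = (0::complex)"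
  shows "(\<Sum>i\<in>{1..n}. F i) = (\<Sum>k=0..D. F (c - k))"
proof -
  have "(\<Sum>i\<in>{1..n}. F i) = (\<Sum>i\<in>{c-D..c}. F i)"
    by (rule sum.mono_neutral_right) (use assms in auto)
  also have "\<dots> = (\<Sum>k=0..D. F (c - k))"
    by (rule sum.reindex_bij_witness[of _ "\<lambda>k. c - k" "\<lambda>i. c - i"]) (use assms in auto)
  finally show ?thesis .
qed

lemma main_sum:
  assumes n: "n \<ge> 2" and a: "a \<in> {1..n}" and b: "b \<in> {1..n}"
  shows "(\<Sum>i\<in>{1..n}. \<Sum>j\<in>{1..n}. (fps_X ^ i * PA) $$ a * (fps_X ^ j * PB) $$ b * eta n i j y) =
    (if n + 1 \<le> a + b then (PA * (PB * Wf n y)) $$ (a + b - n - 1) else 0)"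
proof -
  define W where "W = Wf n y"
  define F where "F = (\<lambda>i j. if i \<le> a \<and> j \<le> b \<and> n + 1 \<le> i + j
      then PA $$ (a - i) * PB $$ (b - j) * W $$ (i + j - n - 1) else 0)"
  have step1: "(\<Sum>i\<in>{1..n}. \<Sum>j\<in>{1..n}. (fps_X ^ i * PA) $$ a * (fps_X ^ j * PB) $$ b * eta n i j y) =
     (\<Sum>i\<in>{1..n}. \<Sum>j\<in>{1..n}. F i j)"
  proof (intro sum.cong refl)
    fix i j assume i: "i \<in> {1..n}" and j: "j \<in> {1..n}"
    show "(fps_X ^ i * PA) $$ a * (fps_X ^ j * PB) $$ b * eta n i j y = F i j"
      unfolding eta_W[OF n i j] fps_X_power_mult_nth F_def W_def by auto
  qed
  show ?thesis
  proof (cases "n + 1 \<le> a + b")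
    case False
    have "F i j = 0" for i j using False by (auto simp: F_def)
    then show ?thesis using False step1 by simp
  next
    case True
    define d where "d = a + b - n - 1"
    have step2: "(\<Sum>i\<in>{1..n}. \<Sum>j\<in>{1..n}. F i j) = (\<Sum>k=0..d. \<Sum>j\<in>{1..n}. F (a - k) j)"
    proof (rule sum_reflect)
      show "1 \<le> a - d" "d \<le> a" "a \<le> n" using a b True by (auto simp: d_def)
      fix i assume "i \<in> {1..n}" "i < a - d \<or> a < i"
      then show "(\<Sum>j\<in>{1..n}. F i j) = 0" using True by (intro sum.neutral) (auto simp: F_def d_def)
    qed
    have step3: "(\<Sum>j\<in>{1..n}. F (a - k) j) = (\<Sum>l=0..d-k. PA $$ k * (PB $$ l * W $$ (d - k - l)))"
      if k: "k \<in> {0..d}" for k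
    proof -
      have "(\<Sum>j\<in>{1..n}. F (a - k) j) = (\<Sum>l=0..d-k. F (a - k) (b - l))"
      proof (rule sum_reflect)
        show "1 \<le> b - (d - k)" "d - k \<le> b" "b \<le> n" using a b True k by (auto simp: d_def)
        fix j assume "j \<in> {1..n}" "j < b - (d - k) \<or> b < j"
        then show "F (a - k) j = 0" using True k by (auto simp: F_def d_def)
      qed
      also have "\<dots> = (\<Sum>l=0..d-k. PA $$ k * (PB $$ l * W $$ (d - k - l)))"
      proof (rule sum.cong[OF refl])
        fix l assume l: "l \<in> {0..d-k}"
        have "a - k \<le> a \<and> b - l \<le> b \<and> n + 1 \<le> (a - k) + (b - l)" using l k a b True by (auto simp: d_def)
        moreover have "a - (a - k) = k" "b - (b - l) = l" "(a - k) + (b - l) - n - 1 = d - k - l"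
          using l k a b True by (auto simp: d_def)
        ultimately show "F (a - k) (b - l) = PA $$ k * (PB $$ l * W $$ (d - k - l))"
          unfolding F_def by simp
      qed
      finally show ?thesis .
    qed
    have rhs: "(PA * (PB * W)) $$ d = (\<Sum>k=0..d. \<Sum>l=0..d-k. PA $$ k * (PB $$ l * W $$ (d - k - l)))"
      by (simp add: fps_mult_nth sum_distrib_left)
    show ?thesis using True step1 step2 step3 rhs by (simp add: W_def d_def)
  qed
qed


section \<open>Flat coordinates\<close>

definition ee :: "nat \<Rightarrow> nat \<Rightarrow> complex" where
  "ee n a = (of_nat a - 1) / (of_nat n - 1)"

definition tf :: "nat \<Rightarrow> nat \<Rightarrow> (nat \<Rightarrow> complex) \<Rightarrow> complex" where
  "tf n a y = (if a = 1 then y 1 else (1 / ee n a) * Phi n (ee n a) y $$ a)"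

lemma n1_nz: "n \<ge> 2 \<Longrightarrow> (of_nat n - 1 :: complex) \<noteq> 0"
  by (metis of_nat_1 of_nat_eq_iff right_minus_eq Suc_1 Suc_n_not_le_n)

lemma ee_nz: "n \<ge> 2 \<Longrightarrow> a \<ge> 2 \<Longrightarrow> ee n a \<noteq> 0"
proof -
  assume n: "n \<ge> 2" and a: "a \<ge> 2"
  have "(of_nat a - 1 :: complex) \<noteq> 0" using n1_nz[OF a] .
  then show ?thesis using n1_nz[OF n] by (simp add: ee_def)
qed

lemma tf_deriv:
  assumes n: "n \<ge> 2" and a: "a \<in> {1..n}" and i: "i \<in> {1..n}"
  shows "((\<lambda>t. tf n a (y(i:=t))) has_field_derivative (fps_X ^ i * Phi n (ee n a - 1) y) $$ a) (at (y i))"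
proof (cases "a = 1")
  case True
  show ?thesis
  proof (cases "i = 1")
    case True
    then have "(\<lambda>t. tf n a (y(i:=t))) = (\<lambda>t. t)" using \<open>a = 1\<close> by (auto simp: tf_def)
    moreover have "(fps_X ^ i * Phi n (ee n a - 1) y) $$ a = 1" using True \<open>a = 1\<close>
      by (simp add: fps_X_power_mult_nth Phi_nth0)
    ultimately show ?thesis by simp
  next
    case False
    then have "(\<lambda>t. tf n a (y(i:=t))) = (\<lambda>t. y 1)" using \<open>a = 1\<close> by (auto simp: tf_def)
    moreover have "(fps_X ^ i * Phi n (ee n a - 1) y) $$ a = 0" using False \<open>a = 1\<close> i
      by (simp add: fps_X_power_mult_nth)
    ultimately show ?thesis by simp
  qed
next
  case False
  then have a2: "a \<ge> 2" using a by auto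
  have e: "ee n a \<noteq> 0" by (rule ee_nz[OF n a2])
  have "(\<lambda>t. tf n a (y(i:=t))) = (\<lambda>t. (1 / ee n a) * Phi n (ee n a) (y(i:=t)) $$ a)"
    using False by (simp add: tf_def)
  moreover have "((\<lambda>t. (1 / ee n a) * Phi n (ee n a) (y(i:=t)) $$ a) has_field_derivative
      (1 / ee n a) * (fps_const (ee n a) * (fps_X ^ i * Phi n (ee n a - 1) y)) $$ a) (at (y i))"
    by (rule DERIV_cmult[OF Phi_deriv_coord[OF i]])
  ultimately show ?thesis using e by simp
qed

lemma aux_frac: "(N::complex) \<noteq> 0 \<Longrightarrow> (x / N - 1) + (y / N - 1) = (x + y - N) / N - 1"
  by (simp add: field_simps)

lemma flat_identity:
  assumes n: "n \<ge> 2" and a: "a \<in> {1..n}" and b: "b \<in> {1..n}"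
  shows "(\<Sum>i\<in>{1..n}. \<Sum>j\<in>{1..n}. (fps_X ^ i * Phi n (ee n a - 1) y) $$ a *
      (fps_X ^ j * Phi n (ee n b - 1) y) $$ b * eta n i j y) = (if a + b = n + 1 then 1 else 0)"
proof -
  have "(\<Sum>i\<in>{1..n}. \<Sum>j\<in>{1..n}. (fps_X ^ i * Phi n (ee n a - 1) y) $$ a *
      (fps_X ^ j * Phi n (ee n b - 1) y) $$ b * eta n i j y) =
      (if n + 1 \<le> a + b then (Phi n (ee n a - 1) y * (Phi n (ee n b - 1) y * Wf n y)) $$ (a + b - n - 1) else 0)"
    by (rule main_sum[OF n a b])
  also have "\<dots> = (if a + b = n + 1 then 1 else 0)"
  proof (cases "n + 1 \<le> a + b")
    case False
    then show ?thesis by simp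
  next
    case True
    define d where "d = a + b - n - 1"
    have "ee n a - 1 + (ee n b - 1) = of_nat d / (of_nat n - 1) - 1"
    proof -
      have "(of_nat d :: complex) = of_nat a + of_nat b - of_nat n - 1"
        using True by (simp add: d_def of_nat_diff)
      then have z: "(of_nat d :: complex) = (of_nat a - 1) + (of_nat b - 1) - (of_nat n - 1)" by simp
      show ?thesis unfolding ee_def z using n1_nz[OF n] by (simp add: aux_frac)
    qed
    then have eqP: "Phi n (ee n a - 1) y * (Phi n (ee n b - 1) y * Wf n y) = Phi n (of_nat d / (of_nat n - 1) - 1) y * Wf n y"
      by (simp only: mult.assoc[symmetric] Phi_mult)
    have "(Phi n (ee n a - 1) y * (Phi n (ee n b - 1) y * Wf n y)) $$ (a + b - n - 1) = (if d = 0 then 1 else 0)"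
      unfolding eqP d_def[symmetric] by (rule final_coeff[OF n])
    moreover have "d = 0 \<longleftrightarrow> a + b = n + 1" using True by (simp add: d_def)
    ultimately show ?thesis using True by simp
  qed
  finally show ?thesis .
qed

lemma wpf_tf: "n \<ge> 2 \<Longrightarrow> wpf n a (tf n a)"
proof -
  assume n: "n \<ge> 2"
  show ?thesis
  proof (cases "a = 1")
    case True
    then have "tf n a = (\<lambda>y. y 1)" by (auto simp: tf_def)
    then show ?thesis using wvar[of 1 n] n True by simp
  next
    case False
    then have "tf n a = (\<lambda>y. (1 / ee n a) * Phi n (ee n a) y $$ a)" by (auto simp: tf_def)
    moreover have "wpf n (0 + a) (\<lambda>y. (1 / ee n a) * Phi n (ee n a) y $$ a)"
      by (intro wmult wconst wpf_Phi)
    ultimately show ?thesis by simp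
  qed
qed


section \<open>Inverse map\<close>

lemma Phi_local:
  "(\<And>j. j \<in> {1..k} \<Longrightarrow> y j = y' j) \<Longrightarrow> Phi n e y $$ k = Phi n e y' $$ k"
proof (induction k rule: less_induct)
  case (less k)
  show ?case
  proof (cases "k = 0")
    case True then show ?thesis by (simp add: Phi_nth0)
  next
    case False
    then have k1: "k \<ge> 1" by simp
    have "(\<Sum>j=1..k. (e * of_nat j - of_nat (k - j)) * Uf n y $$ j * Phi n e y $$ (k - j)) =
          (\<Sum>j=1..k. (e * of_nat j - of_nat (k - j)) * Uf n y' $$ j * Phi n e y' $$ (k - j))"
    proof (rule sum.cong[OF refl])
      fix j assume j: "j \<in> {1..k}"
      have "Uf n y $$ j = Uf n y' $$ j" using j less.prems by (simp add: Uf_nth)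
      moreover have "Phi n e y $$ (k - j) = Phi n e y' $$ (k - j)"
        using j by (intro less.IH) (auto intro: less.prems)
      ultimately show "(e * of_nat j - of_nat (k - j)) * Uf n y $$ j * Phi n e y $$ (k - j) =
          (e * of_nat j - of_nat (k - j)) * Uf n y' $$ j * Phi n e y' $$ (k - j)" by simp
    qed
    then show ?thesis by (simp add: Phi_rec_fun[OF k1])
  qed
qed

definition R :: "nat \<Rightarrow> nat \<Rightarrow> (nat \<Rightarrow> complex) \<Rightarrow> complex" where
  "R n a y = (if a = 1 then 0 else (1 / (ee n a * of_nat a)) *
     (\<Sum>j=1..a-1. (ee n a * of_nat j - of_nat (a - j)) * Uf n y $$ j * Phi n (ee n a) y $$ (a - j)))"

lemma tf_split:
  assumes n: "n \<ge> 2" and a: "a \<in> {1..n}"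
  shows "tf n a y = y a + R n a y"
proof (cases "a = 1")
  case True then show ?thesis by (simp add: tf_def R_def)
next
  case False
  then have a2: "a \<ge> 2" using a by auto
  then obtain m where m: "a = Suc m" by (cases a) auto
  have e: "ee n a \<noteq> 0" by (rule ee_nz[OF n a2])
  define S where "S = (\<Sum>j=1..m. (ee n a * of_nat j - of_nat (a - j)) * Uf n y $$ j * Phi n (ee n a) y $$ (a - j))"
  have "Phi n (ee n a) y $$ a = (1 / of_nat a) * (S + ee n a * of_nat a * y a)"
    unfolding Phi_rec_fun[OF order.trans[OF _ a2], of n "ee n a" y, simplified] S_def
    using m a by (simp add: Uf_nth Phi_nth0)
  then have tfe: "tf n a y = (1 / ee n a) * ((1 / of_nat a) * (S + ee n a * of_nat a * y a))"
    using False by (simp add: tf_def)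
  have a0: "(of_nat a :: complex) \<noteq> 0" using a2 by simp
  have "(1 / ee n a) * ((1 / of_nat a) * (S + ee n a * of_nat a * y a)) = y a + (1 / (ee n a * of_nat a)) * S"
    using e a0 by (simp add: field_simps)
  then have "tf n a y = y a + (1 / (ee n a * of_nat a)) * S" using tfe by simp
  then show ?thesis using False m by (simp add: R_def S_def)
qed

lemma R_local:
  assumes "\<And>j. j \<in> {1..<a} \<Longrightarrow> y j = y' j"
  shows "R n a y = R n a y'"
proof -
  have "(\<Sum>j=1..a-1. (ee n a * of_nat j - of_nat (a - j)) * Uf n y $$ j * Phi n (ee n a) y $$ (a - j)) =
        (\<Sum>j=1..a-1. (ee n a * of_nat j - of_nat (a - j)) * Uf n y' $$ j * Phi n (ee n a) y' $$ (a - j))"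
  proof (rule sum.cong[OF refl])
    fix j assume j: "j \<in> {1..a-1}"
    have "y j = y' j" using j by (intro assms) auto
    then have "Uf n y $$ j = Uf n y' $$ j" by (simp add: Uf_nth)
    moreover have "Phi n (ee n a) y $$ (a - j) = Phi n (ee n a) y' $$ (a - j)"
      using j by (intro Phi_local assms) auto
    ultimately show "(ee n a * of_nat j - of_nat (a - j)) * Uf n y $$ j * Phi n (ee n a) y $$ (a - j) =
        (ee n a * of_nat j - of_nat (a - j)) * Uf n y' $$ j * Phi n (ee n a) y' $$ (a - j)" by simp
  qed
  then show ?thesis by (simp add: R_def)
qed

lemma pf_tf: "n \<ge> 2 \<Longrightarrow> pf n (tf n a)"
  using wpf_pf[OF wpf_tf] .

lemma pf_R:
  assumes n: "n \<ge> 2" and a: "a \<in> {1..n}"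
  shows "pf n (R n a)"
proof -
  have "R n a = (\<lambda>y. tf n a y - y a)" using tf_split[OF n a] by (auto simp: fun_eq_iff)
  moreover have "pf n (\<lambda>y. tf n a y - y a)" by (intro pf_diff pf_tf[OF n] pf_var[OF a])
  ultimately show ?thesis by simp
qed

primrec V :: "nat \<Rightarrow> nat \<Rightarrow> (nat \<Rightarrow> complex) \<Rightarrow> nat \<Rightarrow> complex" where
  "V n 0 t = (\<lambda>_. 0)"
| "V n (Suc a) t = (V n a t)(Suc a := t (Suc a) - R n (Suc a) (V n a t))"

lemma V_mono: "j \<le> a \<Longrightarrow> a \<le> a' \<Longrightarrow> V n a' t j = V n a t j"
proof (induction a')
  case 0 then show ?case by simp
next
  case (Suc a')
  show ?case
  proof (cases "a \<le> a'")
    case True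
    then have "V n (Suc a') t j = V n a' t j" using Suc.prems by simp
    then show ?thesis using Suc.IH[OF Suc.prems(1) True] by simp
  next
    case False
    then have "a = Suc a'" using Suc.prems by simp
    then show ?thesis by simp
  qed
qed

lemma TS:
  assumes n: "n \<ge> 2" and k: "k \<in> {1..n}"
  shows "tf n k (V n n t) = t k"
proof -
  obtain m where m: "k = Suc m" using k by (cases k) auto
  have "tf n k (V n n t) = V n n t k + R n k (V n n t)" by (rule tf_split[OF n k])
  also have "R n k (V n n t) = R n k (V n m t)"
    by (rule R_local) (use k m in \<open>auto intro: V_mono\<close>)
  also have "V n n t k = V n k t k" using k by (intro V_mono) auto
  also have "\<dots> = t k - R n k (V n m t)" using m by simp
  finally show ?thesis by simp
qed

lemma ST:
  assumes n: "n \<ge> 2"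
  shows "a \<le> n \<Longrightarrow> j \<in> {1..a} \<Longrightarrow> V n a (\<lambda>i. tf n i y) j = y j"
proof (induction a arbitrary: j)
  case 0 then show ?case by simp
next
  case (Suc a)
  show ?case
  proof (cases "j = Suc a")
    case True
    have "R n (Suc a) (V n a (\<lambda>i. tf n i y)) = R n (Suc a) y"
      by (rule R_local) (use Suc in auto)
    moreover have "tf n (Suc a) y = y (Suc a) + R n (Suc a) y"
      by (rule tf_split[OF n]) (use Suc in auto)
    ultimately show ?thesis using True by simp
  next
    case False
    then show ?thesis using Suc by simp
  qed
qed

lemma pf_V:
  assumes n: "n \<ge> 2"
  shows "a \<le> n \<Longrightarrow> pf n (\<lambda>t. V n a t j)"
proof (induction a arbitrary: j)
  case 0 then show ?case by (simp add: pf_const)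
next
  case (Suc a)
  show ?case
  proof (cases "j = Suc a")
    case True
    have "pf n (\<lambda>t. R n (Suc a) (\<lambda>i. V n a t i))"
      by (rule pf_compose[OF pf_R[OF n]]) (use Suc in auto)
    then have "pf n (\<lambda>t. t (Suc a) - R n (Suc a) (V n a t))"
      by (intro pf_diff pf_var) (use Suc in auto)
    then show ?thesis using True by simp
  next
    case False
    then show ?thesis using Suc by simp
  qed
qed

section \<open>Invariance\<close>

lemma u_inv_Bn:
  assumes s: "\<sigma> permutes {1..n}" and e: "\<forall>i\<in>{1..n}. \<epsilon> i = 1 \<or> \<epsilon> i = -1"
  shows "u_inv n k (Bn_act \<sigma> \<epsilon> p) = u_inv n k p"
proof -
  define F where "F = {S. S \<subseteq> {1..n} \<and> card S = k}"
  have "u_inv n k (Bn_act \<sigma> \<epsilon> p) = (\<Sum>S\<in>F. \<Prod>i\<in>S. (p (\<sigma> i))\<^sup>2)"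
    unfolding u_inv_def F_def[symmetric] Bn_act_def
  proof (intro sum.cong refl prod.cong)
    fix S i assume "S \<in> F" "i \<in> S"
    then have "\<epsilon> i = 1 \<or> \<epsilon> i = -1" using e by (auto simp: F_def)
    then show "(\<epsilon> i * p (\<sigma> i))\<^sup>2 = (p (\<sigma> i))\<^sup>2" by (auto simp: power2_eq_square)
  qed
  also have "\<dots> = (\<Sum>S\<in>F. \<Prod>i\<in>S. (p i)\<^sup>2)"
  proof (rule sum.reindex_bij_witness[of _ "\<lambda>S. inv \<sigma> ` S" "\<lambda>S. \<sigma> ` S"])
    fix S assume S: "S \<in> F"
    show "inv \<sigma> ` \<sigma> ` S = S" by (simp add: image_image permutes_inverses[OF s])
    have "\<sigma> ` S \<subseteq> {1..n}" using S permutes_image[OF s] by (auto simp: F_def)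
    moreover have "card (\<sigma> ` S) = card S" using permutes_inj[OF s] by (simp add: card_image inj_on_subset)
    ultimately show "\<sigma> ` S \<in> F" using S by (simp add: F_def)
    show "(\<Prod>i\<in>\<sigma> ` S. (p i)\<^sup>2) = (\<Prod>i\<in>S. (p (\<sigma> i))\<^sup>2)"
      using permutes_inj[OF s] by (simp add: prod.reindex inj_on_subset)
  next
    fix S assume S: "S \<in> F"
    show "\<sigma> ` inv \<sigma> ` S = S" by (simp add: image_image permutes_inverses[OF s])
    have si: "inv \<sigma> permutes {1..n}" by (rule permutes_inv[OF s])
    have "inv \<sigma> ` S \<subseteq> {1..n}" using S permutes_image[OF si] by (auto simp: F_def)
    moreover have "card (inv \<sigma> ` S) = card S" using permutes_inj[OF si] by (simp add: card_image inj_on_subset)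
    ultimately show "inv \<sigma> ` S \<in> F" using S by (simp add: F_def)
  qed
  also have "\<dots> = u_inv n k p" by (simp add: u_inv_def F_def)
  finally show ?thesis .
qed


lemma u_inv_ones: "u_inv n j (\<lambda>_. 1) = of_nat (n choose j)"
proof -
  have "u_inv n j (\<lambda>_. 1) = of_nat (card {S. S \<subseteq> {1..n} \<and> card S = j})"
    by (simp add: u_inv_def)
  also have "\<dots> = of_nat (n choose j)" by (simp add: n_subsets)
  finally show ?thesis .
qed

lemma Uf_ones: "Uf n (u_vec n (\<lambda>_. 1)) = fps_binomial (of_nat n)"
proof (rule fps_ext)
  fix j
  show "Uf n (u_vec n (\<lambda>_. 1)) $$ j = fps_binomial (of_nat n) $$ j"
    by (simp add: Uf_nth u_vec_def u_inv_ones binomial_gbinomial[symmetric])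
qed

lemma Phi_ones: "Phi n e (u_vec n (\<lambda>_. 1)) = fps_binomial (of_nat n * e)"
proof -
  define y where "y = u_vec n (\<lambda>_. 1)"
  define P where "P = Phi n e y"
  have u: "(1 + fps_X :: complex fps) $$ 0 \<noteq> 0" by simp
  have dU: "fps_deriv (Uf n y) = fps_const (of_nat n) * Uf n y * inverse (1 + fps_X)"
    unfolding y_def Uf_ones fps_binomial_deriv fps_divide_unit[OF u] ..
  have "fps_deriv P = fps_const e * fps_deriv (Uf n y) * Phi n (e - 1) y"
    unfolding P_def by (rule Phi_deriv)
  also have "\<dots> = (fps_const e * fps_const (of_nat n)) * (Uf n y * Phi n (e - 1) y) * inverse (1 + fps_X)"
    unfolding dU by (simp only: ac_simps)
  also have "fps_const e * fps_const (of_nat n) = fps_const (of_nat n * e)"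
    by (simp add: mult.commute)
  also have "Uf n y * Phi n (e - 1) y = P" using Phi_U[of n y "e - 1"] by (simp add: P_def)
  finally have "fps_deriv P = fps_const (of_nat n * e) * P / (1 + fps_X)"
    by (simp add: fps_divide_unit[OF u])
  moreover have "P $$ 0 = 1" by (simp add: P_def Phi_nth0)
  ultimately have "P = fps_binomial (of_nat n * e)" using fps_binomial_ODE_unique' by blast
  then show ?thesis by (simp add: P_def y_def)
qed

lemma tf_nonzero:
  assumes n: "n \<ge> 2" and k: "k \<in> {1..n}"
  shows "tf n k (u_vec n (\<lambda>_. 1)) \<noteq> 0"
proof (cases "k = 1")
  case True
  then show ?thesis using n by (simp add: tf_def u_vec_def u_inv_ones)
next
  case False
  then have k2: "k \<ge> 2" using k by auto
  have e: "ee n k \<noteq> 0" by (rule ee_nz[OF n k2])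
  have fk: "(fact k :: complex) \<noteq> 0" by simp
  have prod: "(\<Prod>i = 0..<k. of_nat n * ee n k - of_nat i) \<noteq> (0::complex)"
  proof (rule ccontr)
    assume "\<not> ?thesis"
    then obtain i where i: "i < k" "of_nat n * ee n k - of_nat i = (0::complex)" by auto
    have "of_nat n * (of_nat k - 1) = of_nat i * (of_nat n - (1::complex))"
      using i(2) n1_nz[OF n] by (simp add: ee_def field_simps)
    then have "(of_nat (n * (k - 1)) :: complex) = of_nat (i * (n - 1))"
      using k2 n by (simp add: of_nat_diff)
    then have eq: "n * (k - 1) = i * (n - 1)" using of_nat_eq_iff by blast
    have "i \<le> k - 1" using i(1) by simp
    then have "i * (n - 1) \<le> (k - 1) * (n - 1)" by (rule mult_le_mono1)
    also have "\<dots> < (k - 1) * n" using k2 n by simp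
    finally show False using eq by (simp add: mult.commute)
  qed
  have "(of_nat n * ee n k gchoose k) \<noteq> (0::complex)"
    using gbinomial_mult_fact[of k "of_nat n * ee n k :: complex"] prod fk by auto
  then show ?thesis using False e by (simp add: tf_def Phi_ones)
qed


lemma Jac_T:
  assumes n: "n \<ge> 2" and a: "a \<in> {1..n}" and i: "i \<in> {1..n}"
    and c: "is_mpoly n c" "\<And>x. meval n c x = tf n a x"
  shows "meval n (mderiv i c) y = (fps_X ^ i * Phi n (ee n a - 1) y) $$ a"
proof -
  have "((\<lambda>t. meval n c (y(i:=t))) has_field_derivative meval n (mderiv i c) y) (at (y i))"
    by (rule meval_deriv[OF c(1) i])
  moreover have "((\<lambda>t. meval n c (y(i:=t))) has_field_derivative (fps_X ^ i * Phi n (ee n a - 1) y) $$ a) (at (y i))"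
    unfolding c(2) by (rule tf_deriv[OF n a i])
  ultimately show ?thesis by (rule DERIV_unique)
qed

theorem mainTheorem13:
  fixes n :: nat
  assumes "n \<ge> 2"
  shows "\<exists>(t :: nat \<Rightarrow> mpoly) (T :: nat \<Rightarrow> mpoly) (S :: nat \<Rightarrow> mpoly).
    (\<forall>k\<in>{1..n}.
        is_mpoly n (t k) \<and> (\<exists>\<alpha>. t k \<alpha> \<noteq> 0) \<and> homogeneous n (2 * k) (t k) \<and>
        Bn_invariant n (t k) \<and> is_mpoly n (T k) \<and> is_mpoly n (S k) \<and>
        (\<forall>p. meval n (t k) p = meval n (T k) (u_vec n p))) \<and>
    (\<forall>y. \<forall>k\<in>{1..n}. meval n (S k) (\<lambda>j. meval n (T j) y) = y k) \<and>
    (\<forall>y. \<forall>k\<in>{1..n}. meval n (T k) (\<lambda>j. meval n (S j) y) = y k) \<and>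
    (\<forall>y. \<forall>a\<in>{1..n}. \<forall>b\<in>{1..n}.
        (\<Sum>i\<in>{1..n}. \<Sum>j\<in>{1..n}.
           meval n (mderiv i (T a)) y * meval n (mderiv j (T b)) y * eta n i j y)
        = (if a + b = n + 1 then 1 else 0))"
proof -
  note n = assms
  define t where "t = (\<lambda>k. SOME c. is_mpoly n c \<and> homogeneous n (2 * k) c \<and> (\<forall>x. meval n c x = tf n k (u_vec n x)))"
  define T where "T = (\<lambda>k. SOME c. is_mpoly n c \<and> (\<forall>x. meval n c x = tf n k x))"
  define S where "S = (\<lambda>k. SOME c. is_mpoly n c \<and> (\<forall>x. meval n c x = V n n x k))"
  have t: "is_mpoly n (t k) \<and> homogeneous n (2 * k) (t k) \<and> (\<forall>x. meval n (t k) x = tf n k (u_vec n x))" for k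
  proof -
    have "hpf n (2 * k) (\<lambda>p. tf n k (u_vec n p))" by (rule wpf_hpf[OF wpf_tf[OF n]])
    then show ?thesis unfolding t_def hpf_def by (rule someI_ex)
  qed
  have T: "is_mpoly n (T k) \<and> (\<forall>x. meval n (T k) x = tf n k x)" for k
  proof -
    have "pf n (tf n k)" by (rule pf_tf[OF n])
    then show ?thesis unfolding T_def pf_def by (rule someI_ex)
  qed
  have S: "is_mpoly n (S k) \<and> (\<forall>x. meval n (S k) x = V n n x k)" for k
  proof -
    have "pf n (\<lambda>x. V n n x k)" by (rule pf_V[OF n le_refl])
    then show ?thesis unfolding S_def pf_def by (rule someI_ex)
  qed
  have Tev: "(\<lambda>j. meval n (T j) y) = (\<lambda>j. tf n j y)" for y using T by auto
  have Sev: "(\<lambda>j. meval n (S j) y) = V n n y" for y using S by auto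
  have P1: "\<forall>k\<in>{1..n}.
        is_mpoly n (t k) \<and> (\<exists>\<alpha>. t k \<alpha> \<noteq> 0) \<and> homogeneous n (2 * k) (t k) \<and>
        Bn_invariant n (t k) \<and> is_mpoly n (T k) \<and> is_mpoly n (S k) \<and>
        (\<forall>p. meval n (t k) p = meval n (T k) (u_vec n p))"
  proof
    fix k assume k: "k \<in> {1..n}"
    have nz: "\<exists>\<alpha>. t k \<alpha> \<noteq> 0"
    proof (rule ccontr)
      assume "\<not> (\<exists>\<alpha>. t k \<alpha> \<noteq> 0)"
      then have "meval n (t k) (\<lambda>_. 1) = 0" by (simp add: meval_def)
      then show False using t[of k] tf_nonzero[OF n k] by simp
    qed
    have inv: "Bn_invariant n (t k)"
      unfolding Bn_invariant_def
    proof (intro allI impI)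
      fix \<sigma> :: "nat \<Rightarrow> nat" and \<epsilon> p :: "nat \<Rightarrow> complex"
      assume sg: "\<sigma> permutes {1..n}" and eps: "\<forall>i\<in>{1..n}. \<epsilon> i = 1 \<or> \<epsilon> i = -1"
      have "u_vec n (Bn_act \<sigma> \<epsilon> p) = u_vec n p"
        unfolding u_vec_def using u_inv_Bn[OF sg eps] by simp
      then show "meval n (t k) (Bn_act \<sigma> \<epsilon> p) = meval n (t k) p" using t[of k] by simp
    qed
    show "is_mpoly n (t k) \<and> (\<exists>\<alpha>. t k \<alpha> \<noteq> 0) \<and> homogeneous n (2 * k) (t k) \<and>
        Bn_invariant n (t k) \<and> is_mpoly n (T k) \<and> is_mpoly n (S k) \<and>
        (\<forall>p. meval n (t k) p = meval n (T k) (u_vec n p))"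
      using t[of k] T[of k] S[of k] nz inv by simp
  qed
  have P2: "\<forall>y. \<forall>k\<in>{1..n}. meval n (S k) (\<lambda>j. meval n (T j) y) = y k"
    using S ST[OF n le_refl] by (simp add: Tev)
  have P3: "\<forall>y. \<forall>k\<in>{1..n}. meval n (T k) (\<lambda>j. meval n (S j) y) = y k"
    using T TS[OF n] by (simp add: Sev)
  have P4: "\<forall>y. \<forall>a\<in>{1..n}. \<forall>b\<in>{1..n}.
        (\<Sum>i\<in>{1..n}. \<Sum>j\<in>{1..n}.
           meval n (mderiv i (T a)) y * meval n (mderiv j (T b)) y * eta n i j y)
        = (if a + b = n + 1 then 1 else 0)"
  proof (intro allI ballI)
    fix y a b assume a: "a \<in> {1..n}" and b: "b \<in> {1..n}"
    have "(\<Sum>i\<in>{1..n}. \<Sum>j\<in>{1..n}.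
           meval n (mderiv i (T a)) y * meval n (mderiv j (T b)) y * eta n i j y) =
          (\<Sum>i\<in>{1..n}. \<Sum>j\<in>{1..n}. (fps_X ^ i * Phi n (ee n a - 1) y) $$ a *
            (fps_X ^ j * Phi n (ee n b - 1) y) $$ b * eta n i j y)"
    proof (intro sum.cong refl)
      fix i j assume i: "i \<in> {1..n}" and j: "j \<in> {1..n}"
      have "meval n (mderiv i (T a)) y = (fps_X ^ i * Phi n (ee n a - 1) y) $$ a"
        using T[of a] by (intro Jac_T[OF n a i]) auto
      moreover have "meval n (mderiv j (T b)) y = (fps_X ^ j * Phi n (ee n b - 1) y) $$ b"
        using T[of b] by (intro Jac_T[OF n b j]) auto
      ultimately show "meval n (mderiv i (T a)) y * meval n (mderiv j (T b)) y * eta n i j y =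
          (fps_X ^ i * Phi n (ee n a - 1) y) $$ a * (fps_X ^ j * Phi n (ee n b - 1) y) $$ b * eta n i j y"
        by simp
    qed
    also have "\<dots> = (if a + b = n + 1 then 1 else 0)" by (rule flat_identity[OF n a b])
    finally show "(\<Sum>i\<in>{1..n}. \<Sum>j\<in>{1..n}.
           meval n (mderiv i (T a)) y * meval n (mderiv j (T b)) y * eta n i j y) =
          (if a + b = n + 1 then 1 else 0)" .
  qed
  show ?thesis using P1 P2 P3 P4 by blast
qed

end
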